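(* Let $G$ be a graph, $\theta$ a real number, and $X\subseteq V(G)$ with $|X|>1$. Then $X$ is a $\theta$-extreme set in $G$ if and only if $X$ is $\theta$-nice in $G$, i.e. if and only if $\mathrm{mult}(\theta,G\setminus \{u,v\})=\mathrm{mult}(\theta,G)+2$ for all distinct $u,v\in X$.
   Context: All graphs are finite and simple. For a graph $G$ on $n$ vertices, let $p(G,r)$ be the number of $r$-matchings of $G$ ($p(G,0)=1$); the matching polynomial is $\mu(G,x)=\sum_{r=0}^{\lfloor n/2\rfloor}(-1)^r p(G,r)x^{n-2r}$. For real $\theta$, $\mathrm{mult}(\theta,G)$ is the multiplicity of $\theta$ as a root of $\mu(G,x)$ (it is $0$ if $\theta$ is not a root). For $X\subseteq V(G)$, $G\setminus X$ is the graph obtained by deleting the vertices of $X$ and their incident edges. A set $X\subseteq V(G)$ is a $\theta$-extreme set if $\mathrm{mult}(\theta,G\setminus X)=\mathrm{mult}(\theta,G)+|X|$. A set $X$ with $|X|>1$ is $\theta$-nice if $\mathrm{mult}(\theta,G\setminus\{u,v\})=\mathrm{mult}(\theta,G)+2$ for all distinct $u,v\in X$. *)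

theory Defs
  imports "HOL-Analysis.Analysis" "HOL-Computational_Algebra.Polynomial"
begin

definition simple_graph :: "'a set \<Rightarrow> 'a set set \<Rightarrow> bool" where
  "simple_graph V E \<longleftrightarrow> finite V \<and> (\<forall>e\<in>E. e \<subseteq> V \<and> card e = 2)"

text \<open>Edges of G minus X: edges avoiding X (vertex set becomes V - X).\<close>
definition del_edges :: "'a set set \<Rightarrow> 'a set \<Rightarrow> 'a set set" where
  "del_edges E X = {e \<in> E. e \<inter> X = {}}"

definition matchings :: "'a set set \<Rightarrow> nat \<Rightarrow> 'a set set set" where
  "matchings E r = {M. M \<subseteq> E \<and> card M = r \<and> pairwise disjnt M}"

definition num_matchings :: "'a set set \<Rightarrow> nat \<Rightarrow> nat" where
  "num_matchings E r = card (matchings E r)"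

definition match_poly :: "'a set \<Rightarrow> 'a set set \<Rightarrow> real poly" where
  "match_poly V E = (\<Sum>r\<le>card V div 2.
      monom ((-1) ^ r * real (num_matchings E r)) (card V - 2 * r))"

definition mult :: "real \<Rightarrow> 'a set \<Rightarrow> 'a set set \<Rightarrow> nat" where
  "mult \<theta> V E = order \<theta> (match_poly V E)"

definition theta_extreme :: "real \<Rightarrow> 'a set \<Rightarrow> 'a set set \<Rightarrow> 'a set \<Rightarrow> bool" where
  "theta_extreme \<theta> V E X \<longleftrightarrow>
     mult \<theta> (V - X) (del_edges E X) = mult \<theta> V E + card X"

definition theta_nice :: "real \<Rightarrow> 'a set \<Rightarrow> 'a set set \<Rightarrow> 'a set \<Rightarrow> bool" where
  "theta_nice \<theta> V E X \<longleftrightarrow> card X > 1 \<and>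
     (\<forall>u\<in>X. \<forall>v\<in>X. u \<noteq> v \<longrightarrow>
        mult \<theta> (V - {u, v}) (del_edges E {u, v}) = mult \<theta> V E + 2)"

end

theory Submission
  imports Defs
begin

definition mats :: "'a set set \<Rightarrow> 'a set set set" where
  "mats E = {M. M \<subseteq> E \<and> pairwise disjnt M}"

definition mpoly :: "'a set \<Rightarrow> 'a set set \<Rightarrow> ('a \<Rightarrow> complex) \<Rightarrow> complex" where
  "mpoly V E x = (\<Sum>M\<in>mats E. (-1)^card M * (\<Prod>v\<in>V - \<Union>M. x v))"

definition cmpoly :: "'a set \<Rightarrow> 'a set set \<Rightarrow> complex poly" where
  "cmpoly V E = map_poly complex_of_real (match_poly V E)"

lemma sg_finE: "simple_graph V E \<Longrightarrow> finite E"
  unfolding simple_graph_def by (meson PowI finite_Pow_iff finite_subset subsetI)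

lemma finite_mat: "finite E \<Longrightarrow> finite (mats E)"
  unfolding mats_def by (rule finite_subset[of _ "Pow E"]) auto

lemma sg_del: "simple_graph V E \<Longrightarrow> simple_graph (V - S) (del_edges E S)"
  unfolding simple_graph_def del_edges_def by auto

lemma del_del: "del_edges (del_edges E S) T = del_edges E (S \<union> T)"
  unfolding del_edges_def by auto

lemma del_empty[simp]: "del_edges E {} = E"
  unfolding del_edges_def by auto

lemma mpoly_cong: "(\<And>v. v \<in> V \<Longrightarrow> x v = y v) \<Longrightarrow> mpoly V E x = mpoly V E y"
  unfolding mpoly_def by (intro sum.cong refl arg_cong2[where f="(*)"] prod.cong) auto

lemma mat_card_Union:
  assumes "simple_graph V E" "M \<in> mats E"
  shows "card (\<Union>M) = 2 * card M" "\<Union>M \<subseteq> V"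
proof -
  have fin: "finite M" using assms sg_finE finite_subset unfolding mats_def by blast
  have "card (\<Union>M) = sum card M"
    using assms by (intro card_Union_disjoint) (auto simp: mats_def simple_graph_def intro: finite_subset)
  also have "\<dots> = sum (\<lambda>_. 2) M"
    using assms by (intro sum.cong) (auto simp: mats_def simple_graph_def)
  finally show "card (\<Union>M) = 2 * card M" by simp
  show "\<Union>M \<subseteq> V" using assms by (auto simp: mats_def simple_graph_def)
qed

lemma map_of_real_sum: "map_poly complex_of_real (sum f A) = (\<Sum>a\<in>A. map_poly complex_of_real (f a))"
  by (rule poly_eqI) (simp add: coeff_map_poly coeff_sum)

lemma mpoly_const:
  assumes "simple_graph V E"
  shows "mpoly V E (\<lambda>_. z) = poly (cmpoly V E) z"
proof -
  let ?n = "card V"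
  have fV: "finite V" using assms simple_graph_def by blast
  have fM: "finite (mats E)" using finite_mat sg_finE assms by blast
  have "mpoly V E (\<lambda>_. z) = (\<Sum>M\<in>mats E. (-1)^card M * z ^ (?n - 2 * card M))"
  unfolding mpoly_def proof (intro sum.cong refl)
    fix M assume M: "M \<in> mats E"
    have "card (V - \<Union>M) = ?n - 2 * card M"
      using mat_card_Union[OF assms M] fV by (simp add: card_Diff_subset finite_subset)
    then show "(-1)^card M * (\<Prod>v\<in>V - \<Union>M. z) = (-1)^card M * z ^ (?n - 2 * card M)" by simp
  qed
  also have "\<dots> = (\<Sum>r\<le>?n div 2. (\<Sum>M\<in>{M. M \<in> mats E \<and> card M = r}. (-1)^card M * z ^ (?n - 2 * card M)))"
  proof (rule sum.group[symmetric, OF fM])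
    show "card ` mats E \<subseteq> {..?n div 2}"
    proof
      fix r assume "r \<in> card ` mats E"
      then obtain M where M: "M \<in> mats E" "r = card M" by blast
      have "card (\<Union>M) \<le> ?n" using mat_card_Union[OF assms M(1)] fV card_mono by metis
      then show "r \<in> {..?n div 2}" using mat_card_Union[OF assms M(1)] M(2) by auto
    qed
  qed simp
  also have "\<dots> = (\<Sum>r\<le>?n div 2. of_nat (num_matchings E r) * ((-1)^r * z ^ (?n - 2 * r)))"
  proof (intro sum.cong refl)
    fix r
    have "{M. M \<in> mats E \<and> card M = r} = matchings E r"
      unfolding mats_def matchings_def by auto
    then have "(\<Sum>M\<in>{M. M \<in> mats E \<and> card M = r}. (-1)^card M * z ^ (?n - 2 * card M)) =
       (\<Sum>M\<in>matchings E r. (-1)^r * z ^ (?n - 2 * r))"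
      by (intro sum.cong) (auto simp: matchings_def)
    then show "(\<Sum>M\<in>{M. M \<in> mats E \<and> card M = r}. (-1)^card M * z ^ (?n - 2 * card M)) =
       of_nat (num_matchings E r) * ((-1)^r * z ^ (?n - 2 * r))"
      unfolding num_matchings_def by simp
  qed
  also have "\<dots> = poly (cmpoly V E) z"
    unfolding cmpoly_def match_poly_def map_of_real_sum poly_sum
    by (intro sum.cong refl) (simp add: map_poly_monom poly_monom)
  finally show ?thesis .
qed

definition nbr :: "'a set set \<Rightarrow> 'a \<Rightarrow> 'a set" where
  "nbr E u = {v. {u,v} \<in> E}"

lemma mat_del_u: "mats (del_edges E {u}) = {M \<in> mats E. u \<notin> \<Union>M}"
  unfolding mats_def del_edges_def by auto

lemma mpoly_rec:
  assumes sg: "simple_graph V E" and u: "u \<in> V"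
  shows "mpoly V E x = x u * mpoly (V - {u}) (del_edges E {u}) x
           - (\<Sum>v\<in>nbr E u. mpoly (V - {u,v}) (del_edges E {u,v}) x)"
proof -
  define f where "f M = (-1)^card M * (\<Prod>v\<in>V - \<Union>M. x v)" for M :: "'a set set"
  have fV: "finite V" using sg simple_graph_def by blast
  have fE: "finite E" using sg sg_finE by blast
  have fM: "finite (mats E)" using finite_mat fE by blast
  have nbrV: "nbr E u \<subseteq> V - {u}"
    using sg unfolding nbr_def simple_graph_def by (auto simp: card_2_iff doubleton_eq_iff)
  have fN: "finite (nbr E u)" using nbrV fV finite_subset by blast
  define A where "A = {M \<in> mats E. u \<notin> \<Union>M}"
  define B where "B v = {M \<in> mats E. {u,v} \<in> M}" for v
  have split: "mats E = A \<union> (\<Union>v\<in>nbr E u. B v)"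
  proof (intro equalityI subsetI)
    fix M assume M: "M \<in> mats E"
    show "M \<in> A \<union> (\<Union>v\<in>nbr E u. B v)"
    proof (cases "u \<in> \<Union>M")
      case True
      then obtain e where e: "e \<in> M" "u \<in> e" by blast
      have "e \<in> E" "card e = 2" using e M sg by (auto simp: mats_def simple_graph_def)
      then obtain a b where ab: "e = {a,b}" "a \<noteq> b" by (auto simp: card_2_iff)
      then obtain v where "e = {u,v}" using e(2) by blast
      then show ?thesis using e M \<open>e \<in> E\<close> by (auto simp: B_def nbr_def)
    qed (use M in \<open>auto simp: A_def\<close>)
  qed (auto simp: A_def B_def)
  have disjAB: "A \<inter> (\<Union>v\<in>nbr E u. B v) = {}" by (auto simp: A_def B_def)
  have disjB: "B v \<inter> B w = {}" if "v \<in> nbr E u" "w \<in> nbr E u" "v \<noteq> w" for v w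
  proof (rule ccontr)
    assume "B v \<inter> B w \<noteq> {}"
    then obtain M where M: "M \<in> mats E" "{u,v} \<in> M" "{u,w} \<in> M" by (auto simp: B_def)
    have "{u,v} \<noteq> {u,w}" using that by (auto simp: doubleton_eq_iff)
    moreover have "pairwise disjnt M" using M(1) by (simp add: mats_def)
    ultimately have "disjnt {u,v} {u,w}" using M(2,3) by (meson pairwiseD)
    then show False by (simp add: disjnt_def)
  qed
  have sumA: "sum f A = x u * mpoly (V - {u}) (del_edges E {u}) x"
  proof -
    have "sum f A = (\<Sum>M\<in>A. x u * ((-1)^card M * (\<Prod>v\<in>(V - {u}) - \<Union>M. x v)))"
    proof (intro sum.cong refl)
      fix M assume "M \<in> A"
      then have "u \<notin> \<Union>M" by (auto simp: A_def)
      then have "V - \<Union>M = insert u ((V - {u}) - \<Union>M)" using u by auto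
      then show "f M = x u * ((-1)^card M * (\<Prod>v\<in>(V - {u}) - \<Union>M. x v))"
        using fV by (simp add: f_def)
    qed
    also have "\<dots> = x u * mpoly (V - {u}) (del_edges E {u}) x"
      unfolding mpoly_def mat_del_u A_def by (simp add: sum_distrib_left)
    finally show ?thesis .
  qed
  have sumB: "sum f (B v) = - mpoly (V - {u,v}) (del_edges E {u,v}) x" if v: "v \<in> nbr E u" for v
  proof -
    let ?e = "{u,v}"
    have eE: "?e \<in> E" using v by (simp add: nbr_def)
    have bij: "bij_betw (insert ?e) (mats (del_edges E ?e)) (B v)"
    proof (rule bij_betw_imageI)
      show "inj_on (insert ?e) (mats (del_edges E ?e))"
      proof (rule inj_onI)
        fix M1 M2 assume M12: "M1 \<in> mats (del_edges E ?e)" "M2 \<in> mats (del_edges E ?e)" "insert ?e M1 = insert ?e M2"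
        have "?e \<notin> M1" "?e \<notin> M2" using M12(1,2) unfolding mats_def del_edges_def by auto
        then show "M1 = M2" using M12(3) by (simp add: insert_ident)
      qed
      show "insert ?e ` mats (del_edges E ?e) = B v"
      proof (intro equalityI subsetI)
        fix M assume "M \<in> insert ?e ` mats (del_edges E ?e)"
        then obtain M' where M': "M' \<in> mats (del_edges E ?e)" "M = insert ?e M'" by blast
        have "pairwise disjnt M"
        proof -
          have pw: "pairwise disjnt M'" using M'(1) by (simp add: mats_def)
          have "\<forall>y\<in>M'. y \<noteq> ?e \<longrightarrow> disjnt ?e y \<and> disjnt y ?e"
            using M'(1) unfolding mats_def del_edges_def disjnt_def by auto
          then show ?thesis using pw M'(2) by (simp add: pairwise_insert)
        qed
        then show "M \<in> B v" using M' eE by (auto simp: B_def mats_def del_edges_def)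
      next
        fix M assume M: "M \<in> B v"
        have "M - {?e} \<in> mats (del_edges E ?e)"
        proof -
          have "e \<inter> ?e = {}" if "e \<in> M" "e \<noteq> ?e" for e
          proof -
            have "pairwise disjnt M" "?e \<in> M" using M by (auto simp: B_def mats_def)
            then have "disjnt e ?e" using that by (meson pairwiseD)
            then show ?thesis by (simp add: disjnt_def)
          qed
          moreover have "M \<subseteq> E" "pairwise disjnt M" using M by (auto simp: B_def mats_def)
          ultimately show ?thesis unfolding mats_def del_edges_def
            using pairwise_subset[of disjnt M "M - {?e}"] by blast
        qed
        moreover have "M = insert ?e (M - {?e})" using M by (auto simp: B_def)
        ultimately show "M \<in> insert ?e ` mats (del_edges E ?e)" by blast
      qed
    qed
    have "sum f (B v) = sum (f \<circ> insert ?e) (mats (del_edges E ?e))"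
      using sum.reindex_bij_betw[OF bij, of f] by simp
    also have "\<dots> = (\<Sum>M\<in>mats (del_edges E ?e). - ((-1)^card M * (\<Prod>w\<in>(V - ?e) - \<Union>M. x w)))"
    proof (intro sum.cong refl)
      fix M assume M: "M \<in> mats (del_edges E ?e)"
      have "M \<subseteq> E" using M by (auto simp: mats_def del_edges_def)
      then have fin: "finite M" using fE finite_subset by blast
      have nin: "?e \<notin> M" using M by (auto simp: mats_def del_edges_def)
      have "V - \<Union>(insert ?e M) = (V - ?e) - \<Union>M" by auto
      then show "(f \<circ> insert ?e) M = - ((-1)^card M * (\<Prod>w\<in>(V - ?e) - \<Union>M. x w))"
        using fin nin by (simp add: f_def)
    qed
    also have "\<dots> = - mpoly (V - {u,v}) (del_edges E {u,v}) x"
      unfolding mpoly_def by (simp add: sum_negf)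
    finally show ?thesis .
  qed
  have finB: "finite (B v)" for v by (rule finite_subset[OF _ fM]) (auto simp: B_def)
  have finA: "finite A" by (rule finite_subset[OF _ fM]) (auto simp: A_def)
  have finU: "finite (\<Union>v\<in>nbr E u. B v)" using finB fN by blast
  have "mpoly V E x = sum f (mats E)" unfolding mpoly_def f_def ..
  also have "\<dots> = sum f (A \<union> (\<Union>v\<in>nbr E u. B v))" using split by simp
  also have "\<dots> = sum f A + sum f (\<Union>v\<in>nbr E u. B v)"
    by (rule sum.union_disjoint[OF finA finU disjAB])
  also have "sum f (\<Union>v\<in>nbr E u. B v) = (\<Sum>v\<in>nbr E u. sum f (B v))"
    by (rule sum.UNION_disjoint[OF fN]) (use finB disjB in auto)
  also have "\<dots> = (\<Sum>v\<in>nbr E u. - mpoly (V - {u,v}) (del_edges E {u,v}) x)"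
    using sumB by (rule sum.cong[OF refl])
  finally show ?thesis using sumA by (simp add: sum_negf)
qed

lemma mpoly_empty: "simple_graph {} E \<Longrightarrow> mpoly {} E x = 1"
proof -
  assume "simple_graph {} E"
  then have "E = {}" unfolding simple_graph_def by force
  then have "mats E = {{}}" unfolding mats_def by auto
  then show ?thesis unfolding mpoly_def by simp
qed

lemma Im_inv_neg: "Im w > 0 \<Longrightarrow> Im (1 / w) < 0"
proof -
  assume w: "Im w > 0"
  then have "(Re w)\<^sup>2 + (Im w)\<^sup>2 > 0" by (simp add: add_nonneg_pos)
  then show ?thesis using w by (simp add: Im_divide divide_neg_pos)
qed

lemma stable:
  assumes "simple_graph V E" "\<And>v. v \<in> V \<Longrightarrow> Im (x v) > 0"
  shows "mpoly V E x \<noteq> 0 \<and> (\<forall>u\<in>V. Im (mpoly (V - {u}) (del_edges E {u}) x / mpoly V E x) < 0)"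
  using assms
proof (induction "card V" arbitrary: V E rule: less_induct)
  case less
  have fV: "finite V" using less.prems simple_graph_def by blast
  have key: "mpoly V E x \<noteq> 0 \<and> Im (mpoly (V - {u}) (del_edges E {u}) x / mpoly V E x) < 0"
    if u: "u \<in> V" for u
  proof -
    let ?P = "mpoly (V - {u}) (del_edges E {u}) x"
    let ?Q = "\<lambda>v. mpoly (V - {u,v}) (del_edges E {u,v}) x"
    have sg': "simple_graph (V - {u}) (del_edges E {u})" using sg_del less.prems by blast
    have card': "card (V - {u}) < card V" by (rule card_Diff1_less[OF fV u])
    have IH: "?P \<noteq> 0 \<and> (\<forall>v\<in>V - {u}. Im (mpoly (V - {u} - {v}) (del_edges (del_edges E {u}) {v}) x / ?P) < 0)"
      using less.hyps[OF card' sg'] less.prems by auto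
    have nbrV: "nbr E u \<subseteq> V - {u}"
      using less.prems(1) unfolding nbr_def simple_graph_def by (auto simp: card_2_iff doubleton_eq_iff)
    have Qneg: "Im (?Q v / ?P) < 0" if "v \<in> nbr E u" for v
    proof -
      have "V - {u} - {v} = V - {u,v}" by auto
      moreover have "del_edges (del_edges E {u}) {v} = del_edges E {u,v}" by (simp add: del_del insert_commute)
      moreover have "v \<in> V - {u}" using that nbrV by auto
      ultimately show ?thesis using IH by metis
    qed
    define w where "w = x u - (\<Sum>v\<in>nbr E u. ?Q v / ?P)"
    have Imw: "Im w > 0"
    proof -
      have "Im (\<Sum>v\<in>nbr E u. ?Q v / ?P) \<le> 0"
        unfolding Im_sum by (rule sum_nonpos) (use Qneg in \<open>simp add: less_imp_le\<close>)
      then show ?thesis using less.prems(2)[OF u] by (simp add: w_def)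
    qed
    have eq: "mpoly V E x = ?P * w"
      unfolding mpoly_rec[OF less.prems(1) u] w_def using IH
      by (simp add: right_diff_distrib sum_distrib_left)
    have wnz: "w \<noteq> 0" using Imw by auto
    have "mpoly V E x \<noteq> 0" using eq IH wnz by simp
    moreover have "?P / mpoly V E x = 1 / w" using eq IH wnz by simp
    ultimately show ?thesis using Im_inv_neg[OF Imw] by simp
  qed
  show ?case
  proof (cases "V = {}")
    case True
    then have "mpoly V E x = 1" using mpoly_empty less.prems(1) by simp
    then show ?thesis using True by simp
  next
    case False
    then obtain u where "u \<in> V" by blast
    then show ?thesis using key by blast
  qed
qed

lemma pick_univ:
  assumes "simple_graph V E" "u \<in> V" "Im z > 0"
  shows "Im (poly (cmpoly (V - {u}) (del_edges E {u})) z / poly (cmpoly V E) z) < 0"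
  using stable[OF assms(1), of "\<lambda>_. z"] assms
  by (simp add: mpoly_const[symmetric] sg_del)

lemma cmp_nz: "simple_graph V E \<Longrightarrow> match_poly V E \<noteq> 0"
proof
  assume sg: "simple_graph V E" and "match_poly V E = 0"
  then have "poly (cmpoly V E) \<i> = 0" by (simp add: cmpoly_def)
  moreover have "mpoly V E (\<lambda>_. \<i>) \<noteq> 0" using stable[OF sg, of "\<lambda>_. \<i>"] by simp
  ultimately show False using mpoly_const[OF sg] by simp
qed

lemma root_upper:
  fixes w :: complex and k :: nat
  assumes "w \<noteq> 0" "k \<ge> 2" "k \<ge> 3 \<or> Arg w \<noteq> 0"
  shows "\<exists>\<zeta>. Im \<zeta> > 0 \<and> \<zeta> ^ k = w"
proof -
  define \<phi> where "\<phi> = (if Arg w > 0 then Arg w else Arg w + 2 * pi)"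
  define r where "r = cmod w"
  have r: "r > 0" using assms(1) by (simp add: r_def)
  have kpos: "real k \<ge> 2" using assms(2) by simp
  have ab: "- pi < Arg w" "Arg w \<le> pi" using Arg_bounded by auto
  have phi_pos: "\<phi> / k > 0" using ab kpos pi_gt_zero by (auto simp: \<phi>_def)
  have phi_lt: "\<phi> / k < pi"
  proof (cases "Arg w > 0")
    case True
    then have "\<phi> \<le> pi" using ab by (simp add: \<phi>_def)
    moreover have "pi * real k \<ge> pi * 2" using kpos pi_gt_zero by simp
    ultimately have "\<phi> < pi * real k" using pi_gt_zero by linarith
    then show ?thesis using kpos by (simp add: pos_divide_less_eq)
  next
    case False
    then have phi: "\<phi> = Arg w + 2 * pi" by (simp add: \<phi>_def)
    show ?thesis
    proof (cases "k \<ge> 3")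
      case True
      then have "real k \<ge> 3" by simp
      then have "pi * real k \<ge> pi * 3" using pi_gt_zero by simp
      moreover have "\<phi> \<le> 2 * pi" using False phi by simp
      ultimately have "\<phi> < pi * real k" using pi_gt_zero by linarith
      then show ?thesis using kpos by (simp add: pos_divide_less_eq)
    next
      case False
      then have "k = 2" "Arg w \<noteq> 0" using assms by auto
      then have "Arg w < 0" using \<open>\<not> Arg w > 0\<close> by simp
      then show ?thesis using phi \<open>k = 2\<close> by simp
    qed
  qed
  define \<zeta> where "\<zeta> = rcis (root k r) (\<phi> / k)"
  have "Im \<zeta> > 0" unfolding \<zeta>_def using r phi_pos phi_lt assms(2)
    by (simp add: sin_gt_zero)
  moreover have "\<zeta> ^ k = w"
  proof -
    have "\<zeta> ^ k = rcis (root k r ^ k) (real k * (\<phi> / k))" unfolding \<zeta>_def by (rule DeMoivre2)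
    also have "\<dots> = rcis r \<phi>" using r assms(2) by simp
    also have "\<dots> = rcis r (Arg w)"
      by (simp add: \<phi>_def rcis_def cis.ctr)
    also have "\<dots> = w" unfolding r_def by (rule rcis_cmod_Arg)
    finally show ?thesis .
  qed
  ultimately show ?thesis by blast
qed

lemma map_of_real_mult: "map_poly (complex_of_real) (p*q) = map_poly of_real p * map_poly of_real q"
  by (rule poly_eqI) (simp add: coeff_map_poly coeff_mult)
lemma map_of_real_power: "map_poly (complex_of_real) (p^n) = (map_poly of_real p)^n"
  by (induction n) (simp_all add: map_of_real_mult)
lemma map_of_real_lin: "map_poly (complex_of_real) [:-a,1:] = [:- of_real a, 1:]"
  by (simp add: map_poly_pCons)
lemma poly_map_of_real: "poly (map_poly (complex_of_real) p) (of_real x) = of_real (poly p x)"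
  by (induction p) (auto simp: map_poly_pCons)

lemma cmp_decomp:
  assumes "simple_graph V E" "n \<le> mult \<theta> V E"
  shows "\<exists>q. (\<forall>z. poly (cmpoly V E) z = (z - of_real \<theta>)^n * poly q z) \<and>
             (n = mult \<theta> V E \<longrightarrow> poly q (of_real \<theta>) \<noteq> 0)"
proof -
  let ?p = "match_poly V E"
  have nz: "?p \<noteq> 0" using cmp_nz[OF assms(1)] .
  obtain q where q: "?p = [:-\<theta>,1:]^(order \<theta> ?p) * q" "\<not> [:-\<theta>,1:] dvd q"
    using order_decomp[OF nz] by blast
  have qt: "poly q \<theta> \<noteq> 0" using q(2) by (simp add: poly_eq_0_iff_dvd)
  define m where "m = order \<theta> ?p"
  have mm: "m = mult \<theta> V E" by (simp add: m_def mult_def)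
  define Q where "Q = map_poly complex_of_real ([:-\<theta>,1:]^(m - n) * q)"
  have "poly (cmpoly V E) z = (z - of_real \<theta>)^n * poly Q z" for z
  proof -
    have "?p = [:-\<theta>,1:]^n * ([:-\<theta>,1:]^(m - n) * q)"
      using q(1) assms(2) mm unfolding m_def by (simp add: power_add[symmetric] mult.assoc)
    then have "cmpoly V E = [:- of_real \<theta>, 1:]^n * Q"
      unfolding cmpoly_def Q_def by (simp add: map_of_real_mult map_of_real_power map_of_real_lin)
    then show ?thesis by simp
  qed
  moreover have "n = mult \<theta> V E \<longrightarrow> poly Q (of_real \<theta>) \<noteq> 0"
    using qt mm by (simp add: Q_def poly_map_of_real)
  ultimately show ?thesis by blast
qed

lemma Arg_zero_Im: "Arg w = 0 \<Longrightarrow> Im w = 0"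
  using rcis_cmod_Arg[of w] by (metis Im_rcis mult_zero_right sin_zero)

lemma pick_local:
  fixes P1 Q1 :: "complex poly" and \<theta> :: real and a b :: nat
  assumes P1: "poly P1 (of_real \<theta>) \<noteq> 0" and Q1: "poly Q1 (of_real \<theta>) \<noteq> 0" and ab: "b + 2 \<le> a"
    and pk: "\<And>z. Im z > 0 \<Longrightarrow> Im ((z - of_real \<theta>)^a * poly P1 z / ((z - of_real \<theta>)^b * poly Q1 z)) < 0"
  shows False
proof -
  define k where "k = a - b"
  have k2: "k \<ge> 2" using ab by (simp add: k_def)
  have aeq: "a = k + b" using ab by (simp add: k_def)
  define c where "c = poly P1 (of_real \<theta>) / poly Q1 (of_real \<theta>)"
  have cnz: "c \<noteq> 0" using P1 Q1 by (simp add: c_def)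
  obtain w where w: "w \<noteq> 0" "Arg w \<noteq> 0" "Im (c * w) = 1"
  proof (cases "Arg (\<i> / c) = 0")
    case False
    have "Im (c * (\<i> / c)) = 1" using cnz by simp
    moreover have "\<i> / c \<noteq> 0" using cnz by simp
    ultimately show ?thesis using that False by blast
  next
    case True
    define t where "t = \<i> / c"
    have "Im t = 0" using Arg_zero_Im True by (simp add: t_def)
    have tnz: "t \<noteq> 0" using cnz by (simp add: t_def)
    have c_eq: "c = \<i> / t" using cnz by (simp add: t_def)
    have "(\<i> - 1) / c = (\<i> - 1) * t / \<i>" using c_eq tnz by simp
    also have "\<dots> = t + \<i> * t" by (simp add: field_simps)
    finally have e: "(\<i> - 1) / c = t + \<i> * t" .
    have "Re t \<noteq> 0" using tnz \<open>Im t = 0\<close> complex_eq_iff by force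
    then have "Im ((\<i> - 1) / c) \<noteq> 0" using e \<open>Im t = 0\<close> by simp
    then have "Arg ((\<i> - 1) / c) \<noteq> 0" using Arg_zero_Im by blast
    moreover have "Im (c * ((\<i> - 1) / c)) = 1" using cnz by simp
    moreover have "(\<i> - 1) \<noteq> (0::complex)" by (simp add: complex_eq_iff)
    then have "(\<i> - 1) / c \<noteq> 0" using cnz by simp
    ultimately show ?thesis using that by blast
  qed
  obtain \<omega> where om: "Im \<omega> > 0" "\<omega> ^ k = w" using root_upper[OF w(1) k2] w(2) by blast
  define zz where "zz = (\<lambda>\<delta>::real. of_real \<theta> + of_real \<delta> * \<omega>)"
  define F where "F = (\<lambda>\<delta>::real. (zz \<delta> - of_real \<theta>)^a * poly P1 (zz \<delta>) / ((zz \<delta> - of_real \<theta>)^b * poly Q1 (zz \<delta>)) / of_real (\<delta>^k))"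
  have Feq: "F \<delta> = \<omega>^k * poly P1 (zz \<delta>) / poly Q1 (zz \<delta>)" if "\<delta> > 0" for \<delta>
  proof -
    have nz: "of_real \<delta> * \<omega> \<noteq> 0" using that om(1) by auto
    have "zz \<delta> - of_real \<theta> = of_real \<delta> * \<omega>" by (simp add: zz_def)
    then have "F \<delta> = (of_real \<delta> * \<omega>)^k * (of_real \<delta> * \<omega>)^b * poly P1 (zz \<delta>) / ((of_real \<delta> * \<omega>)^b * poly Q1 (zz \<delta>)) / of_real (\<delta>^k)"
      unfolding F_def aeq by (simp only: power_add)
    also have "\<dots> = (of_real \<delta> * \<omega>)^k * poly P1 (zz \<delta>) / poly Q1 (zz \<delta>) / of_real (\<delta>^k)"
      using nz by (simp add: field_split_simps)
    also have "\<dots> = \<omega>^k * poly P1 (zz \<delta>) / poly Q1 (zz \<delta>)"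
      using that by (simp add: power_mult_distrib field_split_simps)
    finally show ?thesis .
  qed
  have lim: "(F \<longlongrightarrow> w * c) (at_right 0)"
  proof -
    have "(zz \<longlongrightarrow> of_real \<theta> + of_real 0 * \<omega>) (at_right 0)"
      unfolding zz_def by (intro tendsto_intros)
    then have zl: "(zz \<longlongrightarrow> of_real \<theta>) (at_right 0)" by simp
    have "((\<lambda>\<delta>. \<omega>^k * poly P1 (zz \<delta>) / poly Q1 (zz \<delta>)) \<longlongrightarrow> \<omega>^k * poly P1 (of_real \<theta>) / poly Q1 (of_real \<theta>)) (at_right 0)"
      by (intro tendsto_intros zl Q1)
    moreover have "\<omega>^k * poly P1 (of_real \<theta>) / poly Q1 (of_real \<theta>) = w * c" using om(2) by (simp add: c_def)
    ultimately have "((\<lambda>\<delta>. \<omega>^k * poly P1 (zz \<delta>) / poly Q1 (zz \<delta>)) \<longlongrightarrow> w * c) (at_right 0)" by simp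
    moreover have "eventually (\<lambda>\<delta>. \<omega>^k * poly P1 (zz \<delta>) / poly Q1 (zz \<delta>) = F \<delta>) (at_right (0::real))"
      using Feq eventually_at_right_less[of 0] by (auto elim!: eventually_mono)
    ultimately show ?thesis by (rule Lim_transform_eventually)
  qed
  then have limIm: "((\<lambda>\<delta>. Im (F \<delta>)) \<longlongrightarrow> Im (w * c)) (at_right 0)" by (intro tendsto_intros)
  have ev: "eventually (\<lambda>\<delta>. Im (F \<delta>) \<le> 0) (at_right (0::real))"
  proof -
    have "Im (F \<delta>) \<le> 0" if "\<delta> > 0" for \<delta>
    proof -
      have "Im (zz \<delta>) > 0" using that om(1) by (simp add: zz_def)
      then have "Im ((zz \<delta> - of_real \<theta>)^a * poly P1 (zz \<delta>) / ((zz \<delta> - of_real \<theta>)^b * poly Q1 (zz \<delta>))) < 0"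
        by (rule pk)
      moreover have "Im (F \<delta>) = Im ((zz \<delta> - of_real \<theta>)^a * poly P1 (zz \<delta>) / ((zz \<delta> - of_real \<theta>)^b * poly Q1 (zz \<delta>))) / \<delta>^k"
        unfolding F_def by (rule Im_divide_of_real)
      ultimately show ?thesis using that by (simp add: divide_nonpos_pos)
    qed
    then show ?thesis using eventually_at_right_less[of 0] by (auto elim!: eventually_mono)
  qed
  have "Im (w * c) \<le> 0" using tendsto_upperbound[OF limIm ev] by simp
  then show False using w(3) by (simp add: mult.commute)
qed

lemma mult_U:
  assumes sg: "simple_graph V E" and u: "u \<in> V"
  shows "mult \<theta> (V - {u}) (del_edges E {u}) \<le> mult \<theta> V E + 1"
proof (rule ccontr)
  assume "\<not> ?thesis"
  then have ab: "mult \<theta> V E + 2 \<le> mult \<theta> (V - {u}) (del_edges E {u})" by simp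
  have sg': "simple_graph (V - {u}) (del_edges E {u})" using sg_del[OF sg] .
  obtain q where q: "\<And>z. poly (cmpoly V E) z = (z - of_real \<theta>)^(mult \<theta> V E) * poly q z" "poly q (of_real \<theta>) \<noteq> 0"
    using cmp_decomp[OF sg order.refl] by blast
  obtain q' where q': "\<And>z. poly (cmpoly (V - {u}) (del_edges E {u})) z = (z - of_real \<theta>)^(mult \<theta> (V - {u}) (del_edges E {u})) * poly q' z"
     "poly q' (of_real \<theta>) \<noteq> 0"
    using cmp_decomp[OF sg' order.refl] by blast
  show False
  proof (rule pick_local[OF q'(2) q(2) ab])
    fix z :: complex assume z: "Im z > 0"
    show "Im ((z - of_real \<theta>) ^ mult \<theta> (V - {u}) (del_edges E {u}) * poly q' z /
          ((z - of_real \<theta>) ^ mult \<theta> V E * poly q z)) < 0"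
      using pick_univ[OF sg u z] unfolding q(1)[of z] q'(1)[of z] .
  qed
qed

lemma Im_inv_pos: "Im y < 0 \<Longrightarrow> Im (1 / y) > 0"
proof -
  assume w: "Im y < 0"
  then have "(Re y)\<^sup>2 + (Im y)\<^sup>2 > 0" by (simp add: add_nonneg_pos)
  then show ?thesis using w by (simp add: Im_divide divide_neg_pos)
qed

lemma mult_L:
  assumes sg: "simple_graph V E" and u: "u \<in> V"
  shows "mult \<theta> V E \<le> mult \<theta> (V - {u}) (del_edges E {u}) + 1"
proof (rule ccontr)
  assume "\<not> ?thesis"
  then have ab: "mult \<theta> (V - {u}) (del_edges E {u}) + 2 \<le> mult \<theta> V E" by simp
  have sg': "simple_graph (V - {u}) (del_edges E {u})" using sg_del[OF sg] .
  obtain q where q: "\<And>z. poly (cmpoly V E) z = (z - of_real \<theta>)^(mult \<theta> V E) * poly q z" "poly q (of_real \<theta>) \<noteq> 0"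
    using cmp_decomp[OF sg order.refl] by blast
  obtain q' where q': "\<And>z. poly (cmpoly (V - {u}) (del_edges E {u})) z = (z - of_real \<theta>)^(mult \<theta> (V - {u}) (del_edges E {u})) * poly q' z"
     "poly q' (of_real \<theta>) \<noteq> 0"
    using cmp_decomp[OF sg' order.refl] by blast
  have q2: "poly (-q) (of_real \<theta>) \<noteq> 0" using q(2) by simp
  show False
  proof (rule pick_local[OF q2 q'(2) ab])
    fix z :: complex assume z: "Im z > 0"
    have "Im (poly (cmpoly (V - {u}) (del_edges E {u})) z / poly (cmpoly V E) z) < 0"
      using pick_univ[OF sg u z] .
    then have "Im (1 / (poly (cmpoly (V - {u}) (del_edges E {u})) z / poly (cmpoly V E) z)) > 0"
      by (rule Im_inv_pos)
    then show "Im ((z - of_real \<theta>) ^ mult \<theta> V E * poly (- q) z /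
          ((z - of_real \<theta>) ^ mult \<theta> (V - {u}) (del_edges E {u}) * poly q' z)) < 0"
    proof -
      define A where "A = (z - of_real \<theta>) ^ mult \<theta> (V - {u}) (del_edges E {u}) * poly q' z"
      define B where "B = (z - of_real \<theta>) ^ mult \<theta> V E * poly q z"
      have eA: "poly (cmpoly (V - {u}) (del_edges E {u})) z = A" unfolding A_def by (rule q'(1))
      have eB: "poly (cmpoly V E) z = B" unfolding B_def by (rule q(1))
      have "Im (1 / (A / B)) > 0" using \<open>Im (1 / _) > 0\<close> unfolding eA eB .
      moreover have "1 / (A / B) = B / A" by simp
      ultimately have imBA: "Im (B / A) > 0" by (simp only:)
      have eqX: "(z - of_real \<theta>) ^ mult \<theta> V E * poly (- q) z / A = - (B / A)"
        unfolding B_def poly_minus mult_minus_right by (rule minus_divide_left[symmetric])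
      have "Im ((z - of_real \<theta>) ^ mult \<theta> V E * poly (- q) z / A) = - Im (B / A)"
        unfolding eqX by (simp only: uminus_complex.sel)
      then have "Im ((z - of_real \<theta>) ^ mult \<theta> V E * poly (- q) z / A) < 0"
        using imBA by linarith
      then show ?thesis unfolding A_def .
    qed
  qed
qed

definition pt :: "'a set \<Rightarrow> complex \<Rightarrow> complex \<Rightarrow> 'a \<Rightarrow> complex" where
  "pt X z s = (\<lambda>v. if v \<in> X then z + s else z)"

lemma mpoly_shift:
  assumes sg: "simple_graph V E" and y: "y \<in> V"
  shows "mpoly V E (x(y := x y + s)) = mpoly V E x + s * mpoly (V - {y}) (del_edges E {y}) x"
proof -
  let ?x' = "x(y := x y + s)"
  have e1: "mpoly (V - {y}) (del_edges E {y}) ?x' = mpoly (V - {y}) (del_edges E {y}) x"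
    by (rule mpoly_cong) auto
  have e2: "mpoly (V - {y,v}) (del_edges E {y,v}) ?x' = mpoly (V - {y,v}) (del_edges E {y,v}) x" for v
    by (rule mpoly_cong) auto
  have ar: "(a + s) * P - S = a * P - S + s * P" for a P S :: complex by (simp add: algebra_simps)
  show ?thesis
    unfolding mpoly_rec[OF sg y, of ?x'] mpoly_rec[OF sg y, of x] e1 e2 fun_upd_same
    by (rule ar)
qed

lemma expand:
  assumes "simple_graph V E" "X \<subseteq> V"
  shows "mpoly V E (pt X z s) = (\<Sum>S\<in>Pow X. s^card S * mpoly (V - S) (del_edges E S) (\<lambda>_. z))"
proof -
  have fX: "finite X" using assms unfolding simple_graph_def by (meson finite_subset)
  have "\<forall>V E. simple_graph V E \<longrightarrow> X \<subseteq> V \<longrightarrow>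
     mpoly V E (pt X z s) = (\<Sum>S\<in>Pow X. s^card S * mpoly (V - S) (del_edges E S) (\<lambda>_. z))"
    using fX
  proof (induction X rule: finite_induct)
    case empty
    show ?case by (simp add: pt_def)
  next
    case (insert y X)
    show ?case
    proof (intro allI impI)
      fix V E assume sg: "simple_graph V E" and sub: "insert y X \<subseteq> V"
      have yV: "y \<in> V" using sub by auto
      have sg': "simple_graph (V - {y}) (del_edges E {y})" using sg_del[OF sg] .
      have ptins: "pt (insert y X) z s = (pt X z s)(y := pt X z s y + s)"
        using insert.hyps(2) by (auto simp: pt_def)
      have "mpoly V E (pt (insert y X) z s) = mpoly V E (pt X z s) + s * mpoly (V - {y}) (del_edges E {y}) (pt X z s)"
        unfolding ptins by (rule mpoly_shift[OF sg yV])
      also have "mpoly V E (pt X z s) = (\<Sum>S\<in>Pow X. s^card S * mpoly (V - S) (del_edges E S) (\<lambda>_. z))"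
        using insert.IH sg sub by auto
      also have "mpoly (V - {y}) (del_edges E {y}) (pt X z s) =
          (\<Sum>S\<in>Pow X. s^card S * mpoly (V - {y} - S) (del_edges (del_edges E {y}) S) (\<lambda>_. z))"
        using insert.IH sg' sub insert.hyps(2) by auto
      also have "\<dots> = (\<Sum>S\<in>Pow X. s^card S * mpoly (V - insert y S) (del_edges E (insert y S)) (\<lambda>_. z))"
        by (intro sum.cong refl) (simp add: del_del Diff_insert2[symmetric])
      finally have L0: "mpoly V E (pt (insert y X) z s) =
         (\<Sum>S\<in>Pow X. s^card S * mpoly (V - S) (del_edges E S) (\<lambda>_. z)) +
         s * (\<Sum>S\<in>Pow X. s^card S * mpoly (V - insert y S) (del_edges E (insert y S)) (\<lambda>_. z))" .
      have cS: "card (insert y S) = Suc (card S)" if "S \<in> Pow X" for S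
      proof -
        have "finite S" "y \<notin> S" using that insert.hyps rev_finite_subset by auto
        then show ?thesis by simp
      qed
      have "s * (\<Sum>S\<in>Pow X. s^card S * mpoly (V - insert y S) (del_edges E (insert y S)) (\<lambda>_. z))
          = (\<Sum>S\<in>Pow X. s^card (insert y S) * mpoly (V - insert y S) (del_edges E (insert y S)) (\<lambda>_. z))"
        unfolding sum_distrib_left by (intro sum.cong refl) (simp add: cS mult.assoc)
      then have L: "mpoly V E (pt (insert y X) z s) =
         (\<Sum>S\<in>Pow X. s^card S * mpoly (V - S) (del_edges E S) (\<lambda>_. z)) +
         (\<Sum>S\<in>Pow X. s^card (insert y S) * mpoly (V - insert y S) (del_edges E (insert y S)) (\<lambda>_. z))"
        using L0 by simp
      have disj: "Pow X \<inter> insert y ` Pow X = {}" using insert.hyps(2) by auto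
      have inj: "inj_on (insert y) (Pow X)" using insert.hyps(2) by (auto simp: inj_on_def)
      have "(\<Sum>S\<in>Pow (insert y X). s^card S * mpoly (V - S) (del_edges E S) (\<lambda>_. z)) =
          (\<Sum>S\<in>Pow X. s^card S * mpoly (V - S) (del_edges E S) (\<lambda>_. z)) +
          (\<Sum>S\<in>insert y ` Pow X. s^card S * mpoly (V - S) (del_edges E S) (\<lambda>_. z))"
        unfolding Pow_insert using insert.hyps(1) disj by (intro sum.union_disjoint) auto
      also have "(\<Sum>S\<in>insert y ` Pow X. s^card S * mpoly (V - S) (del_edges E S) (\<lambda>_. z)) =
          (\<Sum>S\<in>Pow X. s^card (insert y S) * mpoly (V - insert y S) (del_edges E (insert y S)) (\<lambda>_. z))"
        by (subst sum.reindex[OF inj]) simp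
      finally show "mpoly V E (pt (insert y X) z s) = (\<Sum>S\<in>Pow (insert y X). s^card S * mpoly (V - S) (del_edges E S) (\<lambda>_. z))"
        using L by simp
    qed
  qed
  then show ?thesis using assms by blast
qed

lemma deriv_sum:
  assumes sg: "simple_graph V E" and XV: "X \<subseteq> V"
  shows "(\<Sum>x\<in>X. mpoly (V - {x}) (del_edges E {x}) (pt X z s)) =
         (\<Sum>S\<in>Pow X. of_nat (card S) * (s^(card S - 1) * mpoly (V - S) (del_edges E S) (\<lambda>_. z)))"
proof -
  have fX: "finite X" using assms unfolding simple_graph_def by (meson finite_subset)
  define g where "g T = s^(card T - 1) * mpoly (V - T) (del_edges E T) (\<lambda>_. z)" for T
  have one: "mpoly (V - {x}) (del_edges E {x}) (pt X z s) = (\<Sum>T\<in>{T\<in>Pow X. x \<in> T}. g T)" if x: "x \<in> X" for x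
  proof -
    have sg': "simple_graph (V - {x}) (del_edges E {x})" using sg_del[OF sg] .
    have "mpoly (V - {x}) (del_edges E {x}) (pt X z s) = mpoly (V - {x}) (del_edges E {x}) (pt (X - {x}) z s)"
      by (rule mpoly_cong) (auto simp: pt_def)
    also have "\<dots> = (\<Sum>S\<in>Pow (X - {x}). s^card S * mpoly (V - {x} - S) (del_edges (del_edges E {x}) S) (\<lambda>_. z))"
      by (rule expand[OF sg']) (use XV in auto)
    also have "\<dots> = (\<Sum>S\<in>Pow (X - {x}). g (insert x S))"
    proof (intro sum.cong refl)
      fix S assume S: "S \<in> Pow (X - {x})"
      have "finite S" "x \<notin> S" using S fX rev_finite_subset by auto
      then have "card (insert x S) - 1 = card S" by simp
      moreover have "V - {x} - S = V - insert x S" by auto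
      moreover have "del_edges (del_edges E {x}) S = del_edges E (insert x S)" by (simp add: del_del)
      ultimately show "s^card S * mpoly (V - {x} - S) (del_edges (del_edges E {x}) S) (\<lambda>_. z) = g (insert x S)"
        by (simp add: g_def)
    qed
    also have "\<dots> = (\<Sum>T\<in>{T\<in>Pow X. x \<in> T}. g T)"
    proof (rule sum.reindex_bij_betw)
      show "bij_betw (insert x) (Pow (X - {x})) {T \<in> Pow X. x \<in> T}"
      proof (rule bij_betw_imageI)
        show "inj_on (insert x) (Pow (X - {x}))" by (auto simp: inj_on_def)
        show "insert x ` Pow (X - {x}) = {T \<in> Pow X. x \<in> T}"
        proof (intro equalityI subsetI)
          fix T assume "T \<in> {T \<in> Pow X. x \<in> T}"
          then have "T = insert x (T - {x})" "T - {x} \<in> Pow (X - {x})" by auto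
          then show "T \<in> insert x ` Pow (X - {x})" by blast
        qed (use x in auto)
      qed
    qed
    finally show ?thesis .
  qed
  have "(\<Sum>x\<in>X. mpoly (V - {x}) (del_edges E {x}) (pt X z s)) = (\<Sum>x\<in>X. \<Sum>T\<in>{T\<in>Pow X. x \<in> T}. g T)"
    using one by (rule sum.cong[OF refl])
  also have "\<dots> = (\<Sum>T\<in>Pow X. \<Sum>x\<in>{x\<in>X. x \<in> T}. g T)"
    by (rule sum.swap_restrict) (use fX in auto)
  also have "\<dots> = (\<Sum>T\<in>Pow X. of_nat (card T) * g T)"
  proof (intro sum.cong refl)
    fix T assume "T \<in> Pow X"
    then have "{x\<in>X. x \<in> T} = T" by auto
    then show "(\<Sum>x\<in>{x\<in>X. x \<in> T}. g T) = of_nat (card T) * g T" by simp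
  qed
  finally show ?thesis by (simp add: g_def)
qed

lemma pw1: "((\<i>::complex) * d^k)^n = \<i>^n * d^(k*n)"
  by (simp add: power_mult_distrib power_mult)
lemma pw2: "((\<sigma>::complex) / d^p)^n = \<sigma>^n / d^(p*n)"
  by (simp add: power_divide power_mult)

lemma alg1:
  fixes d \<sigma> q :: complex
  assumes "d \<noteq> 0" "p \<le> k"
  shows "(\<sigma> / d^p)^j * ((\<i> * d^k)^(m+j) * q) / d^(k*m) = \<sigma>^j * \<i>^(m+j) * d^((k-p)*j) * q"
proof -
  have kk: "(k-p) + p = k" using assms(2) by simp
  have "(k-p)*j + p*j = k*j" by (metis add_mult_distrib kk)
  then have e: "k*(m+j) = k*m + (k-p)*j + p*j" by (simp add: add_mult_distrib2)
  have "d^(k*(m+j)) = d^(k*m) * d^((k-p)*j) * d^(p*j)" unfolding e by (simp only: power_add)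
  then show ?thesis using assms(1) unfolding pw1 pw2 by (simp add: field_simps)
qed

lemma alg2:
  fixes d \<sigma> q :: complex
  assumes "d \<noteq> 0"
  shows "(\<sigma> / d^p)^k * ((\<i> * d^k)^(m+p) * q) / d^(k*m) = \<sigma>^k * \<i>^(m+p) * q"
proof -
  have e: "k*(m+p) = k*m + p*k" by (simp add: algebra_simps)
  have "d^(k*(m+p)) = d^(k*m) * d^(p*k)" unfolding e by (simp only: power_add)
  then show ?thesis using assms(1) unfolding pw1 pw2 by (simp add: field_simps)
qed

lemma alg3:
  fixes d \<sigma> q :: complex
  assumes "d \<noteq> 0" "p \<le> k" "1 \<le> j"
  shows "of_nat j * ((\<sigma> / d^p)^(j-1) * ((\<i> * d^k)^(m+j) * q)) / d^(k*m+p) =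
         of_nat j * (\<sigma>^(j-1) * \<i>^(m+j) * d^((k-p)*j) * q)"
proof -
  have kk: "(k-p) + p = k" using assms(2) by simp
  have "(k-p)*j + p*j = k*j" by (metis add_mult_distrib kk)
  moreover have "p*j = p + p*(j-1)" using assms(3) by (cases j) auto
  ultimately have e: "k*(m+j) = (k*m + p) + (k-p)*j + p*(j-1)" by (simp add: add_mult_distrib2)
  have "d^(k*(m+j)) = d^(k*m + p) * d^((k-p)*j) * d^(p*(j-1))" unfolding e by (simp only: power_add)
  then show ?thesis using assms(1) unfolding pw1 pw2 by (simp add: field_simps)
qed

lemma alg4:
  fixes d \<sigma> q :: complex
  assumes "d \<noteq> 0" "1 \<le> k"
  shows "of_nat k * ((\<sigma> / d^p)^(k-1) * ((\<i> * d^k)^(m+p) * q)) / d^(k*m+p) =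
         of_nat k * (\<sigma>^(k-1) * \<i>^(m+p) * q)"
proof -
  have "p*k = p + p*(k-1)" using assms(2) by (cases k) auto
  then have e: "k*(m+p) = (k*m + p) + p*(k-1)" by (simp add: algebra_simps)
  have "d^(k*(m+p)) = d^(k*m + p) * d^(p*(k-1))" unfolding e by (simp only: power_add)
  then show ?thesis using assms(1) unfolding pw1 pw2 by (simp add: field_simps)
qed

lemma sum_two:
  assumes "finite P" "X \<in> P" "{} \<in> P" "X \<noteq> {}"
  shows "(\<Sum>S\<in>P. if S = X then a else if S = {} then b else 0) = a + (b::complex)"
proof -
  have "(\<Sum>S\<in>P. if S = X then a else if S = {} then b else 0) =
        (\<Sum>S\<in>P. (if S = X then a else 0) + (if S = {} then b else 0))"
    using assms(4) by (intro sum.cong refl) auto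
  also have "\<dots> = a + b" using assms by (simp add: sum.distrib)
  finally show ?thesis .
qed

lemma sum_one:
  assumes "finite P" "X \<in> P"
  shows "(\<Sum>S\<in>P. if S = X then a else 0) = (a::complex)"
  using assms by simp

lemma two_pow_ne1: "k \<ge> 1 \<Longrightarrow> (2::real)^k \<noteq> 1"
proof -
  assume "k \<ge> 1"
  then have "(2::real)^k \<ge> 2^1" by (intro power_increasing) auto
  then show ?thesis by simp
qed

lemma ext_step:
  fixes \<theta> :: real
  assumes sg: "simple_graph V E" and XV: "X \<subseteq> V" and k3: "card X \<ge> 3"
    and hyp: "\<And>S. S \<subset> X \<Longrightarrow> mult \<theta> V E + card S \<le> mult \<theta> (V - S) (del_edges E S)"
    and cge: "mult \<theta> V E \<le> mult \<theta> (V - X) (del_edges E X)"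
    and clt: "mult \<theta> (V - X) (del_edges E X) < mult \<theta> V E + card X"
  shows False
proof -
  define m where "m = mult \<theta> V E"
  define c where "c = mult \<theta> (V - X) (del_edges E X)"
  define k where "k = card X"
  define p where "p = c - m"
  have fX: "finite X" using sg XV unfolding simple_graph_def by (meson finite_subset)
  have Xne: "X \<noteq> {}" using k3 by auto
  have pk: "p < k" using clt cge by (simp add: p_def k_def c_def m_def)
  have cmp_eq: "c = m + p" using cge by (simp add: p_def c_def m_def)
  have k1: "1 \<le> k" "3 \<le> k" using k3 by (auto simp: k_def)
  define e where "e S = (if S = X then c else m + card S)" for S
  have ex: "\<forall>S\<in>Pow X. \<exists>q. (\<forall>z. poly (cmpoly (V - S) (del_edges E S)) z = (z - of_real \<theta>)^(e S) * poly q z)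
              \<and> ((S = X \<or> S = {}) \<longrightarrow> poly q (of_real \<theta>) \<noteq> 0)"
  proof
    fix S assume S: "S \<in> Pow X"
    have sgS: "simple_graph (V - S) (del_edges E S)" by (rule sg_del[OF sg])
    have le: "e S \<le> mult \<theta> (V - S) (del_edges E S)"
    proof (cases "S = X")
      case True then show ?thesis by (simp add: e_def c_def)
    next
      case False then have "S \<subset> X" using S by auto
      then show ?thesis using hyp False by (simp add: e_def m_def)
    qed
    have eqm: "(S = X \<or> S = {}) \<longrightarrow> e S = mult \<theta> (V - S) (del_edges E S)"
      using Xne by (auto simp: e_def c_def m_def)
    show "\<exists>q. (\<forall>z. poly (cmpoly (V - S) (del_edges E S)) z = (z - of_real \<theta>)^(e S) * poly q z)
              \<and> ((S = X \<or> S = {}) \<longrightarrow> poly q (of_real \<theta>) \<noteq> 0)"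
    proof -
      obtain q where q: "\<forall>z. poly (cmpoly (V - S) (del_edges E S)) z = (z - of_real \<theta>)^(e S) * poly q z"
        "e S = mult \<theta> (V - S) (del_edges E S) \<longrightarrow> poly q (of_real \<theta>) \<noteq> 0"
        using cmp_decomp[OF sgS le] by blast
      have q2: "(S = X \<or> S = {}) \<longrightarrow> poly q (of_real \<theta>) \<noteq> 0" using q(2) eqm by simp
      show ?thesis by (rule exI[of _ q], rule conjI, rule q(1), rule q2)
    qed
  qed
  from bchoice[OF ex] obtain qf where H: "\<forall>S\<in>Pow X. (\<forall>z. poly (cmpoly (V - S) (del_edges E S)) z = (z - of_real \<theta>)^(e S) * poly (qf S) z)
              \<and> ((S = X \<or> S = {}) \<longrightarrow> poly (qf S) (of_real \<theta>) \<noteq> 0)" ..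
  have qf: "poly (cmpoly (V - S) (del_edges E S)) z = (z - of_real \<theta>)^(e S) * poly (qf S) z" if "S \<in> Pow X" for S z
    using H that by blast
  have qfX: "poly (qf X) (of_real \<theta>) \<noteq> 0" using H by blast
  have qf0: "poly (qf {}) (of_real \<theta>) \<noteq> 0" using H by blast
  define A where "A = \<i>^c * poly (qf X) (of_real \<theta>)"
  define B where "B = \<i>^m * poly (qf {}) (of_real \<theta>)"
  have Anz: "A \<noteq> 0" using qfX by (simp add: A_def)
  have Bnz: "B \<noteq> 0" using qf0 by (simp add: B_def)
  obtain \<zeta> where \<zeta>: "Im \<zeta> > 0" "\<zeta>^k = - (B / A)"
    using root_upper[of "- (B / A)" k] Anz Bnz k1 by auto
  define \<sigma> where "\<sigma> = \<zeta> / 2"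
  define zz where "zz \<delta> = of_real \<theta> + \<i> * (of_real \<delta>)^k" for \<delta> :: real
  define ss where "ss \<delta> = \<sigma> / (of_real \<delta>)^p" for \<delta> :: real
  define Den where "Den \<delta> = mpoly V E (pt X (zz \<delta>) (ss \<delta>)) / (of_real \<delta>)^(k*m)" for \<delta> :: real
  define Num where "Num \<delta> = (\<Sum>x\<in>X. mpoly (V - {x}) (del_edges E {x}) (pt X (zz \<delta>) (ss \<delta>))) / (of_real \<delta>)^(k*m+p)" for \<delta> :: real
  define DT where "DT S \<delta> = (if S = X then \<sigma>^k * \<i>^c * poly (qf X) (zz \<delta>)
      else \<sigma>^card S * \<i>^(m + card S) * (of_real \<delta>)^((k-p)*card S) * poly (qf S) (zz \<delta>))" for S and \<delta> :: real
  define NT where "NT S \<delta> = (if S = X then of_nat k * (\<sigma>^(k-1) * \<i>^c * poly (qf X) (zz \<delta>))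
      else of_nat (card S) * (\<sigma>^(card S - 1) * \<i>^(m + card S) * (of_real \<delta>)^((k-p)*card S) * poly (qf S) (zz \<delta>)))" for S and \<delta> :: real
  have zzt: "zz \<delta> - of_real \<theta> = \<i> * (of_real \<delta>)^k" for \<delta> by (simp add: zz_def)
  have Den_eq: "Den \<delta> = (\<Sum>S\<in>Pow X. DT S \<delta>)" if "\<delta> > 0" for \<delta>
  proof -
    have d: "(of_real \<delta> :: complex) \<noteq> 0" using that by simp
    have "Den \<delta> = (\<Sum>S\<in>Pow X. ss \<delta>^card S * mpoly (V - S) (del_edges E S) (\<lambda>_. zz \<delta>)) / (of_real \<delta>)^(k*m)"
      unfolding Den_def expand[OF sg XV] ..
    also have "\<dots> = (\<Sum>S\<in>Pow X. ss \<delta>^card S * mpoly (V - S) (del_edges E S) (\<lambda>_. zz \<delta>) / (of_real \<delta>)^(k*m))"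
      by (rule sum_divide_distrib)
    also have "\<dots> = (\<Sum>S\<in>Pow X. DT S \<delta>)"
    proof (intro sum.cong refl)
      fix S assume S: "S \<in> Pow X"
      have "mpoly (V - S) (del_edges E S) (\<lambda>_. zz \<delta>) = (\<i> * (of_real \<delta>)^k)^(e S) * poly (qf S) (zz \<delta>)"
        using mpoly_const[OF sg_del[OF sg]] qf[OF S] zzt by simp
      moreover have "card S = k" if "S = X" using that by (simp add: k_def)
      ultimately show "ss \<delta>^card S * mpoly (V - S) (del_edges E S) (\<lambda>_. zz \<delta>) / (of_real \<delta>)^(k*m) = DT S \<delta>"
        unfolding ss_def DT_def e_def cmp_eq
        using alg1[OF d, of p k \<sigma> "card S" m] alg2[OF d, of \<sigma> p k m] pk by auto
    qed
    finally show ?thesis .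
  qed
  have Num_eq: "Num \<delta> = (\<Sum>S\<in>Pow X. NT S \<delta>)" if "\<delta> > 0" for \<delta>
  proof -
    have d: "(of_real \<delta> :: complex) \<noteq> 0" using that by simp
    have "Num \<delta> = (\<Sum>S\<in>Pow X. of_nat (card S) * (ss \<delta>^(card S - 1) * mpoly (V - S) (del_edges E S) (\<lambda>_. zz \<delta>))) / (of_real \<delta>)^(k*m+p)"
      unfolding Num_def deriv_sum[OF sg XV] ..
    also have "\<dots> = (\<Sum>S\<in>Pow X. of_nat (card S) * (ss \<delta>^(card S - 1) * mpoly (V - S) (del_edges E S) (\<lambda>_. zz \<delta>)) / (of_real \<delta>)^(k*m+p))"
      by (rule sum_divide_distrib)
    also have "\<dots> = (\<Sum>S\<in>Pow X. NT S \<delta>)"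
    proof (intro sum.cong refl)
      fix S assume S: "S \<in> Pow X"
      have mp: "mpoly (V - S) (del_edges E S) (\<lambda>_. zz \<delta>) = (\<i> * (of_real \<delta>)^k)^(e S) * poly (qf S) (zz \<delta>)"
        using mpoly_const[OF sg_del[OF sg]] qf[OF S] zzt by simp
      show "of_nat (card S) * (ss \<delta>^(card S - 1) * mpoly (V - S) (del_edges E S) (\<lambda>_. zz \<delta>)) / (of_real \<delta>)^(k*m+p) = NT S \<delta>"
      proof (cases "S = X")
        case True
        then have "card S = k" by (simp add: k_def)
        then show ?thesis unfolding ss_def NT_def e_def cmp_eq mp
          using alg4[OF d k1(1), of \<sigma> p m] True by simp
      next
        case False
        show ?thesis
        proof (cases "card S = 0")
          case True then show ?thesis using False by (simp add: NT_def)
        next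
          case c0: False
          then show ?thesis unfolding ss_def NT_def e_def mp
            using alg3[OF d, of p k "card S" \<sigma> m] pk False by simp
        qed
      qed
    qed
    finally show ?thesis .
  qed
  have zzl: "(zz \<longlongrightarrow> of_real \<theta>) (at_right 0)"
  proof -
    have "(zz \<longlongrightarrow> of_real \<theta> + \<i> * (of_real 0)^k) (at_right 0)"
      unfolding zz_def by (intro tendsto_intros)
    moreover have "(0::complex)^k = 0" using k1 by simp
    ultimately show ?thesis by simp
  qed
  have powl: "((\<lambda>\<delta>::real. (of_real \<delta> :: complex)^n) \<longlongrightarrow> 0) (at_right 0)" if "n \<ge> 1" for n
  proof -
    have "((\<lambda>\<delta>::real. (of_real \<delta> :: complex)^n) \<longlongrightarrow> (of_real 0)^n) (at_right 0)"
      by (intro tendsto_intros)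
    moreover have "(0::complex)^n = 0" using that by simp
    ultimately show ?thesis by simp
  qed
  have DTl: "(DT S \<longlongrightarrow> (if S = X then \<sigma>^k * A else if S = {} then B else 0)) (at_right 0)"
    if S: "S \<in> Pow X" for S
  proof (cases "S = X")
    case True
    have e: "DT S = (\<lambda>\<delta>. \<sigma>^k * \<i>^c * poly (qf X) (zz \<delta>))" using True by (intro ext) (simp add: DT_def)
    have "((\<lambda>\<delta>. \<sigma>^k * \<i>^c * poly (qf X) (zz \<delta>)) \<longlongrightarrow> \<sigma>^k * \<i>^c * poly (qf X) (of_real \<theta>)) (at_right 0)"
      by (intro tendsto_intros zzl)
    then show ?thesis unfolding e using True by (simp add: A_def mult.assoc)
  next
    case False
    show ?thesis
    proof (cases "S = {}")
      case True
      have e: "DT S = (\<lambda>\<delta>. \<i>^m * poly (qf {}) (zz \<delta>))" using True False by (intro ext) (simp add: DT_def)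
      have "((\<lambda>\<delta>. \<i>^m * poly (qf {}) (zz \<delta>)) \<longlongrightarrow> \<i>^m * poly (qf {}) (of_real \<theta>)) (at_right 0)"
        by (intro tendsto_intros zzl)
      then show ?thesis unfolding e using True Xne by (simp add: B_def)
    next
      case Sne: False
      have e: "DT S = (\<lambda>\<delta>. \<sigma>^card S * \<i>^(m + card S) * (of_real \<delta>)^((k-p)*card S) * poly (qf S) (zz \<delta>))"
        using False by (intro ext) (simp add: DT_def)
      have "finite S" using S fX rev_finite_subset by auto
      then have "card S \<ge> 1" using Sne by (simp add: Suc_le_eq card_gt_0_iff)
      then have "(k-p) * card S \<ge> 1" using pk by simp
      then have "((\<lambda>\<delta>. \<sigma>^card S * \<i>^(m + card S) * (of_real \<delta>)^((k-p)*card S) * poly (qf S) (zz \<delta>))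
           \<longlongrightarrow> \<sigma>^card S * \<i>^(m + card S) * 0 * poly (qf S) (of_real \<theta>)) (at_right 0)"
        by (intro tendsto_intros zzl powl)
      then show ?thesis unfolding e using False Sne by simp
    qed
  qed
  have NTl: "(NT S \<longlongrightarrow> (if S = X then of_nat k * \<sigma>^(k-1) * A else 0)) (at_right 0)"
    if S: "S \<in> Pow X" for S
  proof (cases "S = X")
    case True
    have e: "NT S = (\<lambda>\<delta>. of_nat k * (\<sigma>^(k-1) * \<i>^c * poly (qf X) (zz \<delta>)))" using True by (intro ext) (simp add: NT_def)
    have "((\<lambda>\<delta>. of_nat k * (\<sigma>^(k-1) * \<i>^c * poly (qf X) (zz \<delta>))) \<longlongrightarrow> of_nat k * (\<sigma>^(k-1) * \<i>^c * poly (qf X) (of_real \<theta>))) (at_right 0)"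
      by (intro tendsto_intros zzl)
    then show ?thesis unfolding e using True by (simp add: A_def mult.assoc)
  next
    case False
    show ?thesis
    proof (cases "S = {}")
      case True
      have e: "NT S = (\<lambda>\<delta>. 0)" using True False by (intro ext) (simp add: NT_def)
      then show ?thesis using False by simp
    next
      case Sne: False
      have e: "NT S = (\<lambda>\<delta>. of_nat (card S) * (\<sigma>^(card S - 1) * \<i>^(m + card S) * (of_real \<delta>)^((k-p)*card S) * poly (qf S) (zz \<delta>)))"
        using False by (intro ext) (simp add: NT_def)
      have "finite S" using S fX rev_finite_subset by auto
      then have "card S \<ge> 1" using Sne by (simp add: Suc_le_eq card_gt_0_iff)
      then have "(k-p) * card S \<ge> 1" using pk by simp
      then have "((\<lambda>\<delta>. of_nat (card S) * (\<sigma>^(card S - 1) * \<i>^(m + card S) * (of_real \<delta>)^((k-p)*card S) * poly (qf S) (zz \<delta>)))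
           \<longlongrightarrow> of_nat (card S) * (\<sigma>^(card S - 1) * \<i>^(m + card S) * 0 * poly (qf S) (of_real \<theta>))) (at_right 0)"
        by (intro tendsto_intros zzl powl)
      then show ?thesis unfolding e using False by simp
    qed
  qed
  have finP: "finite (Pow X)" using fX by simp
  have Denl: "(Den \<longlongrightarrow> \<sigma>^k * A + B) (at_right 0)"
  proof -
    have "((\<lambda>\<delta>. \<Sum>S\<in>Pow X. DT S \<delta>) \<longlongrightarrow> (\<Sum>S\<in>Pow X. if S = X then \<sigma>^k * A else if S = {} then B else 0)) (at_right 0)"
      by (rule tendsto_sum) (rule DTl)
    moreover have "(\<Sum>S\<in>Pow X. if S = X then \<sigma>^k * A else if S = {} then B else 0) = \<sigma>^k * A + B"
      by (rule sum_two) (use finP Xne in auto)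
    moreover have "eventually (\<lambda>\<delta>. (\<Sum>S\<in>Pow X. DT S \<delta>) = Den \<delta>) (at_right (0::real))"
      using Den_eq eventually_at_right_less[of 0] by (auto elim!: eventually_mono)
    ultimately show ?thesis using Lim_transform_eventually by fastforce
  qed
  have Numl: "(Num \<longlongrightarrow> of_nat k * \<sigma>^(k-1) * A) (at_right 0)"
  proof -
    have "((\<lambda>\<delta>. \<Sum>S\<in>Pow X. NT S \<delta>) \<longlongrightarrow> (\<Sum>S\<in>Pow X. if S = X then of_nat k * \<sigma>^(k-1) * A else 0)) (at_right 0)"
      by (rule tendsto_sum) (rule NTl)
    moreover have "(\<Sum>S\<in>Pow X. if S = X then of_nat k * \<sigma>^(k-1) * A else 0) = of_nat k * \<sigma>^(k-1) * A"
      by (rule sum_one) (use finP in auto)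
    moreover have "eventually (\<lambda>\<delta>. (\<Sum>S\<in>Pow X. NT S \<delta>) = Num \<delta>) (at_right (0::real))"
      using Num_eq eventually_at_right_less[of 0] by (auto elim!: eventually_mono)
    ultimately show ?thesis using Lim_transform_eventually by fastforce
  qed
  have zknz: "\<zeta> \<noteq> 0" using \<zeta>(1) by auto
  have Beq: "B = - A * \<zeta>^k" using \<zeta>(2) Anz by (simp add: field_simps)
  have zk: "\<zeta>^k = \<zeta> * \<zeta>^(k-1)" using k1 by (cases k) auto
  define r where "r = 2 * real k / (2^k - 1)"
  have rpos: "r > 0"
  proof -
    have "(2::real)^k \<ge> 2^1" using k1 by (intro power_increasing) auto
    then show ?thesis using k1 by (simp add: r_def)
  qed
  have denv: "\<sigma>^k * A + B = - A * \<zeta>^k * (2^k - 1) / 2^k"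
    unfolding \<sigma>_def Beq by (simp add: power_divide field_simps)
  have den_nz: "\<sigma>^k * A + B \<noteq> 0"
  proof -
    have "(2::complex)^k \<noteq> 1"
    proof
      assume "(2::complex)^k = 1"
      then have "(2::real)^k = 1" by (metis of_real_eq_1_iff of_real_numeral of_real_power)
      then show False using k1 two_pow_ne1 by simp
    qed
    then show ?thesis unfolding denv using Anz zknz by simp
  qed
  have Lval: "of_nat k * \<sigma>^(k-1) * A / (\<sigma>^k * A + B) = - of_real r / \<zeta>"
  proof -
    define T where "T = (2::complex)^(k-1)"
    define Z where "Z = \<zeta>^(k-1)"
    have h2: "(2::complex)^k = 2 * T" using k1 unfolding T_def by (cases k) auto
    have Tnz: "T \<noteq> 0" by (simp add: T_def)
    have Znz: "Z \<noteq> 0" using zknz by (simp add: Z_def)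
    have h3: "2 * T - 1 \<noteq> 0"
    proof
      assume "2 * T - 1 = 0"
      then have "(2::complex)^k = 1" using h2 by simp
      then have "(2::real)^k = 1" by (metis of_real_eq_1_iff of_real_numeral of_real_power)
      then show False using k1 two_pow_ne1 by simp
    qed
    have s1: "\<sigma>^(k-1) = Z / T" unfolding \<sigma>_def Z_def T_def by (simp add: power_divide)
    have s2: "\<sigma>^k = \<zeta> * Z / (2 * T)" unfolding \<sigma>_def by (simp add: power_divide zk h2 Z_def)
    have s3: "B = - A * (\<zeta> * Z)" using Beq zk by (simp add: Z_def)
    have rr: "of_real r = (2 * of_nat k / (2 * T - 1) :: complex)"
    proof -
      have "(of_real ((2::real)^k - 1) :: complex) = 2 * T - 1" using h2 by simp
      then show ?thesis by (simp add: r_def)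
    qed
    show ?thesis unfolding s1 s2 s3 rr using Anz zknz h3 Tnz Znz
      by (simp add: field_simps)
  qed
  have ImL: "Im (- of_real r / \<zeta>) > 0"
  proof -
    have "(Re \<zeta>)\<^sup>2 + (Im \<zeta>)\<^sup>2 > 0" using \<zeta>(1) by (simp add: add_nonneg_pos)
    then show ?thesis using \<zeta>(1) rpos by (simp add: Im_divide)
  qed
  have lim: "((\<lambda>\<delta>. Num \<delta> / Den \<delta>) \<longlongrightarrow> - of_real r / \<zeta>) (at_right 0)"
    using tendsto_divide[OF Numl Denl den_nz] Lval by simp
  then have limIm: "((\<lambda>\<delta>. Im (Num \<delta> / Den \<delta>)) \<longlongrightarrow> Im (- of_real r / \<zeta>)) (at_right 0)"
    by (rule tendsto_Im)
  have ev: "eventually (\<lambda>\<delta>. Im (Num \<delta> / Den \<delta>) \<le> 0) (at_right (0::real))"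
  proof -
    have "Im (Num \<delta> / Den \<delta>) \<le> 0" if "\<delta> > 0" for \<delta>
    proof -
      let ?x = "pt X (zz \<delta>) (ss \<delta>)"
      have d: "(of_real \<delta> :: complex) \<noteq> 0" using that by simp
      have Imz: "Im (zz \<delta>) > 0" using that by (simp add: zz_def flip: of_real_power)
      have Ims: "Im (ss \<delta>) > 0" using that \<zeta>(1) by (simp add: ss_def \<sigma>_def flip: of_real_power)
      have pos: "Im (?x v) > 0" for v using Imz Ims by (simp add: pt_def)
      have st: "mpoly V E ?x \<noteq> 0 \<and> (\<forall>u\<in>V. Im (mpoly (V - {u}) (del_edges E {u}) ?x / mpoly V E ?x) < 0)"
        using stable[OF sg pos] .
      have "Num \<delta> / Den \<delta> = (\<Sum>x\<in>X. mpoly (V - {x}) (del_edges E {x}) ?x / mpoly V E ?x) / of_real (\<delta>^p)"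
        unfolding Num_def Den_def using d st by (simp add: sum_divide_distrib[symmetric] power_add field_simps)
      then have "Im (Num \<delta> / Den \<delta>) = (\<Sum>x\<in>X. Im (mpoly (V - {x}) (del_edges E {x}) ?x / mpoly V E ?x)) / \<delta>^p"
        by (simp add: Im_sum)
      moreover have "(\<Sum>x\<in>X. Im (mpoly (V - {x}) (del_edges E {x}) ?x / mpoly V E ?x)) < 0"
      proof -
        have "(\<Sum>x\<in>X. Im (mpoly (V - {x}) (del_edges E {x}) ?x / mpoly V E ?x)) < (\<Sum>x\<in>X. 0)"
          by (rule sum_strict_mono[OF fX Xne]) (use st XV in auto)
        then show ?thesis by simp
      qed
      ultimately show ?thesis using that by (simp add: divide_neg_pos less_imp_le)
    qed
    then show ?thesis using eventually_at_right_less[of 0] by (auto elim!: eventually_mono)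
  qed
  have "Im (- of_real r / \<zeta>) \<le> 0" using tendsto_upperbound[OF limIm ev] by simp
  then show False using ImL by simp
qed

lemma G_minus: "mult \<theta> (V - S - T) (del_edges (del_edges E S) T) = mult \<theta> (V - (S \<union> T)) (del_edges E (S \<union> T))"
proof -
  have "V - S - T = V - (S \<union> T)" by auto
  then show ?thesis by (simp add: del_del)
qed

lemma mult_U_set:
  assumes sg: "simple_graph V E" and S: "S \<subseteq> V"
  shows "mult \<theta> (V - S) (del_edges E S) \<le> mult \<theta> V E + card S"
proof -
  have fS: "finite S" using sg S unfolding simple_graph_def by (meson finite_subset)
  show ?thesis using fS S
  proof (induction S rule: finite_induct)
    case empty then show ?case by simp
  next
    case (insert y S)
    have sgS: "simple_graph (V - S) (del_edges E S)" by (rule sg_del[OF sg])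
    have yV: "y \<in> V - S" using insert by auto
    have "mult \<theta> (V - S - {y}) (del_edges (del_edges E S) {y}) \<le> mult \<theta> (V - S) (del_edges E S) + 1"
      by (rule mult_U[OF sgS yV])
    moreover have "S \<union> {y} = insert y S" by auto
    ultimately have "mult \<theta> (V - insert y S) (del_edges E (insert y S)) \<le> mult \<theta> (V - S) (del_edges E S) + 1"
      using G_minus by metis
    then show ?case using insert by simp
  qed
qed

lemma mult_U_rel:
  assumes sg: "simple_graph V E" and ST: "S \<subseteq> T" "T \<subseteq> V"
  shows "mult \<theta> (V - T) (del_edges E T) \<le> mult \<theta> (V - S) (del_edges E S) + card (T - S)"
proof -
  have sgS: "simple_graph (V - S) (del_edges E S)" by (rule sg_del[OF sg])
  have "mult \<theta> (V - S - (T - S)) (del_edges (del_edges E S) (T - S)) \<le> mult \<theta> (V - S) (del_edges E S) + card (T - S)"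
    by (rule mult_U_set[OF sgS]) (use ST in auto)
  moreover have "S \<union> (T - S) = T" using ST by auto
  ultimately show ?thesis using G_minus by metis
qed

theorem theorem3p15:
  fixes V :: "'a set" and E :: "'a set set" and X :: "'a set" and \<theta> :: real
  assumes "simple_graph V E" and "X \<subseteq> V" and "card X > 1"
  shows "theta_extreme \<theta> V E X \<longleftrightarrow> theta_nice \<theta> V E X"
proof
  note sg = assms(1) and XV = assms(2) and cX = assms(3)
  have fX: "finite X" using sg XV unfolding simple_graph_def by (meson finite_subset)
  define m where "m = mult \<theta> V E"
  show "theta_extreme \<theta> V E X \<Longrightarrow> theta_nice \<theta> V E X"
  proof -
    assume ext: "theta_extreme \<theta> V E X"
    have "mult \<theta> (V - {u, v}) (del_edges E {u, v}) = m + 2"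
      if u: "u \<in> X" and v: "v \<in> X" and uv: "u \<noteq> v" for u v
    proof -
      have sub: "{u,v} \<subseteq> V" using u v XV by auto
      have c2: "card {u,v} = 2" using uv by simp
      have le: "mult \<theta> (V - {u, v}) (del_edges E {u, v}) \<le> m + 2"
        using mult_U_set[OF sg sub] c2 by (simp add: m_def)
      have "mult \<theta> (V - X) (del_edges E X) \<le> mult \<theta> (V - {u,v}) (del_edges E {u,v}) + card (X - {u,v})"
        by (rule mult_U_rel[OF sg _ XV]) (use u v in auto)
      moreover have "card (X - {u,v}) = card X - 2" using fX u v c2 by (simp add: card_Diff_subset)
      moreover have "mult \<theta> (V - X) (del_edges E X) = m + card X" using ext by (simp add: theta_extreme_def m_def)
      ultimately have "m + 2 \<le> mult \<theta> (V - {u, v}) (del_edges E {u, v})" using cX by linarith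
      then show ?thesis using le by linarith
    qed
    then show "theta_nice \<theta> V E X" using cX by (simp add: theta_nice_def m_def)
  qed
  show "theta_nice \<theta> V E X \<Longrightarrow> theta_extreme \<theta> V E X"
  proof -
    assume nice: "theta_nice \<theta> V E X"
    have pair: "mult \<theta> (V - {u, v}) (del_edges E {u, v}) = m + 2" if "u \<in> X" "v \<in> X" "u \<noteq> v" for u v
      using nice that by (simp add: theta_nice_def m_def)
    have claim: "\<forall>Y. Y \<subseteq> X \<longrightarrow> card Y = n \<longrightarrow> m + n \<le> mult \<theta> (V - Y) (del_edges E Y)" for n
    proof (induction n rule: less_induct)
      case (less n)
      show ?case
      proof (intro allI impI)
        fix Y assume YX: "Y \<subseteq> X" and cY: "card Y = n"
        have fY: "finite Y" using fX YX rev_finite_subset by auto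
        have YV: "Y \<subseteq> V" using YX XV by auto
        have IH: "m + card S \<le> mult \<theta> (V - S) (del_edges E S)" if "S \<subset> Y" for S
          using less.IH[of "card S"] that YX cY psubset_card_mono[OF fY that] by auto
        consider "n = 0" | "n = 1" | "n = 2" | "n \<ge> 3" by linarith
        then show "m + n \<le> mult \<theta> (V - Y) (del_edges E Y)"
        proof cases
          case 1
          then have "Y = {}" using cY fY by simp
          then show ?thesis using 1 by (simp add: m_def)
        next
          case 2
          then obtain y where Y: "Y = {y}" using cY by (auto simp: card_Suc_eq)
          have yX: "y \<in> X" using Y YX by auto
          obtain x where x: "x \<in> X" "x \<noteq> y"
          proof -
            have "X - {y} \<noteq> {}"
            proof
              assume "X - {y} = {}"
              then have "X \<subseteq> {y}" by auto
              then have "card X \<le> card {y}" by (rule card_mono[rotated]) simp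
              then have "card X \<le> 1" by simp
              then show False using cX by simp
            qed
            then show ?thesis using that by blast
          qed
          have sgy: "simple_graph (V - {y}) (del_edges E {y})" by (rule sg_del[OF sg])
          have "mult \<theta> (V - {y} - {x}) (del_edges (del_edges E {y}) {x}) \<le> mult \<theta> (V - {y}) (del_edges E {y}) + 1"
            by (rule mult_U[OF sgy]) (use x XV in auto)
          moreover have "{y} \<union> {x} = {x, y}" by auto
          ultimately have "mult \<theta> (V - {x,y}) (del_edges E {x,y}) \<le> mult \<theta> (V - {y}) (del_edges E {y}) + 1"
            using G_minus by metis
          then show ?thesis using pair[OF x(1) yX x(2)] Y 2 by simp
        next
          case 3
          then obtain u v where Y: "Y = {u,v}" "u \<noteq> v" using cY by (auto simp: card_2_iff)
          then show ?thesis using pair[of u v] YX 3 by auto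
        next
          case 4
          have cge: "m \<le> mult \<theta> (V - Y) (del_edges E Y)"
          proof -
            have "Y \<noteq> {}" using 4 cY by auto
            then obtain y where y: "y \<in> Y" by blast
            have sub: "Y - {y} \<subset> Y" using y by auto
            have "m + card (Y - {y}) \<le> mult \<theta> (V - (Y - {y})) (del_edges E (Y - {y}))" by (rule IH[OF sub])
            moreover have sg': "simple_graph (V - (Y - {y})) (del_edges E (Y - {y}))" by (rule sg_del[OF sg])
            have "mult \<theta> (V - (Y - {y})) (del_edges E (Y - {y})) \<le> mult \<theta> (V - (Y - {y}) - {y}) (del_edges (del_edges E (Y - {y})) {y}) + 1"
              by (rule mult_L[OF sg']) (use y YV in auto)
            moreover have "(Y - {y}) \<union> {y} = Y" using y by auto
            moreover have "card (Y - {y}) = n - 1" using y fY cY by simp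
            moreover have "mult \<theta> (V - (Y - {y}) - {y}) (del_edges (del_edges E (Y - {y})) {y}) = mult \<theta> (V - Y) (del_edges E Y)"
              using G_minus[of \<theta> V "Y - {y}" "{y}" E] \<open>(Y - {y}) \<union> {y} = Y\<close> by simp
            ultimately show ?thesis using 4 by linarith
          qed
          show ?thesis
          proof (rule ccontr)
            assume "\<not> ?thesis"
            then have clt: "mult \<theta> (V - Y) (del_edges E Y) < mult \<theta> V E + card Y" using cY by (simp add: m_def)
            show False
              by (rule ext_step[OF sg YV _ _ _ clt]) (use 4 cY IH cge in \<open>auto simp: m_def\<close>)
          qed
        qed
      qed
    qed
    have "m + card X \<le> mult \<theta> (V - X) (del_edges E X)" using claim by blast
    moreover have "mult \<theta> (V - X) (del_edges E X) \<le> m + card X" using mult_U_set[OF sg XV] by (simp add: m_def)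
    ultimately show "theta_extreme \<theta> V E X" by (simp add: theta_extreme_def m_def)
  qed
qed

end
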